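(* Let $\pi\ge1$. For every input $\sigma=(g_1,\dots,g_T)\in\Sigma$ and every threshold $p\in[m,M]$, the outputs $\bar v_t$ of CR-Pursuit($\pi$) satisfy $$\sum_{t\in[T]:\ p(t)\le p} g_t(\bar v_t)\ \le\ \frac{1}{\pi}\,p\,\Delta,$$ where $p(t)=g_t'(0)$.
   Context: Fix $\Delta>0$ and $0<m\le M$. Let $\mathcal G$ be the family of all functions $g:[0,\Delta]\to\mathbb{R}$ that are concave, increasing and differentiable on $[0,\Delta]$ with $g(0)=0$ and $g'(0)\in[m,M]$. An input is a finite sequence $\sigma=(g_1,\dots,g_T)$, $T\ge1$, $g_t\in\mathcal G$; $\Sigma$ is the set of all inputs; $\sigma^{[1:t]}=(g_1,\dots,g_t)$ ($\sigma^{[1:0]}$ empty). $\eta_{OPT}(\sigma^{[1:t]})$ is the optimal value of $\max\sum_{s=1}^t g_s(v_s)$ s.t. $\sum_{s=1}^t v_s\le\Delta$, $v_s\ge0$ (and $0$ for the empty sequence). For $\pi\ge1$, CR-Pursuit($\pi$) outputs at time $t$ the smallest $\bar v_t\in[0,\Delta]$ with $g_t(\bar v_t)=\frac1\pi\big[\eta_{OPT}(\sigma^{[1:t]})-\eta_{OPT}(\sigma^{[1:t-1]})\big]$. *)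

theory Defs
  imports "HOL-Analysis.Analysis"
begin

definition slope0 :: "real \<Rightarrow> (real \<Rightarrow> real) \<Rightarrow> real" where
  "slope0 \<Delta> g = (THE d. (g has_real_derivative d) (at 0 within {0..\<Delta>}))"

definition inG :: "real \<Rightarrow> real \<Rightarrow> real \<Rightarrow> (real \<Rightarrow> real) \<Rightarrow> bool" where
  "inG \<Delta> m M g \<longleftrightarrow>
     concave_on {0..\<Delta>} g \<and> mono_on {0..\<Delta>} g \<and>
     (\<forall>x\<in>{0..\<Delta>}. g differentiable (at x within {0..\<Delta>})) \<and>
     g 0 = 0 \<and>
     (\<exists>d. (g has_real_derivative d) (at 0 within {0..\<Delta>}) \<and> m \<le> d \<and> d \<le> M)"

definition eta_opt :: "real \<Rightarrow> (nat \<Rightarrow> real \<Rightarrow> real) \<Rightarrow> nat \<Rightarrow> real" where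
  "eta_opt \<Delta> g t = Sup {(\<Sum>s\<in>{1..t}. g s (v s)) | v.
       (\<forall>s\<in>{1..t}. 0 \<le> v s) \<and> (\<Sum>s\<in>{1..t}. v s) \<le> \<Delta>}"

definition cr_pursuit :: "real \<Rightarrow> real \<Rightarrow> (nat \<Rightarrow> real \<Rightarrow> real) \<Rightarrow> nat \<Rightarrow> real" where
  "cr_pursuit \<pi> \<Delta> g t = (LEAST v. v \<in> {0..\<Delta>} \<and>
       g t v = (eta_opt \<Delta> g t - eta_opt \<Delta> g (t - 1)) / \<pi>)"

end

theory Submission imports Defs begin

definition feas :: "real \<Rightarrow> nat \<Rightarrow> (nat \<Rightarrow> real) \<Rightarrow> bool" where
  "feas \<Delta> t v \<longleftrightarrow> (\<forall>s\<in>{1..t}. 0 \<le> v s) \<and> (\<Sum>s\<in>{1..t}. v s) \<le> \<Delta>"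

definition val :: "(nat \<Rightarrow> real \<Rightarrow> real) \<Rightarrow> nat \<Rightarrow> (nat \<Rightarrow> real) \<Rightarrow> real" where
  "val g t v = (\<Sum>s\<in>{1..t}. g s (v s))"

definition Hv :: "real \<Rightarrow> real \<Rightarrow> (nat \<Rightarrow> real \<Rightarrow> real) \<Rightarrow> nat \<Rightarrow> real" where
  "Hv \<Delta> p g t = Sup {val g t v + p * (\<Delta> - (\<Sum>s\<in>{1..t}. v s)) | v. feas \<Delta> t v}"

lemma eta_alt: "eta_opt \<Delta> g t = Sup {val g t v | v. feas \<Delta> t v}"
  unfolding eta_opt_def val_def feas_def by simp

lemma feas_dom: "feas \<Delta> t v \<Longrightarrow> s \<in> {1..t} \<Longrightarrow> 0 \<le> v s \<and> v s \<le> \<Delta>"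
proof -
  assume f: "feas \<Delta> t v" and s: "s \<in> {1..t}"
  have "v s \<le> (\<Sum>s\<in>{1..t}. v s)"
    by (rule member_le_sum) (use f s in \<open>auto simp: feas_def\<close>)
  with f s show ?thesis by (auto simp: feas_def)
qed

lemma feas_sum_nonneg: "feas \<Delta> t v \<Longrightarrow> 0 \<le> (\<Sum>s\<in>{1..t}. v s)"
  by (rule sum_nonneg) (auto simp: feas_def)

lemma feas_zero: "\<Delta> \<ge> 0 \<Longrightarrow> feas \<Delta> t (\<lambda>_. 0)"
  by (simp add: feas_def)

lemma feas_restrict: "feas \<Delta> (Suc n) v \<Longrightarrow> feas \<Delta> n v"
proof -
  assume f: "feas \<Delta> (Suc n) v"
  have "0 \<le> v (Suc n)" using f by (auto simp: feas_def)
  moreover have "(\<Sum>s\<in>{1..Suc n}. v s) = (\<Sum>s\<in>{1..n}. v s) + v (Suc n)" by simp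
  ultimately show ?thesis using f by (auto simp: feas_def le_Suc_eq)
qed

lemma feas_extend0: "feas \<Delta> n v \<Longrightarrow> feas \<Delta> (Suc n) (v(Suc n := 0))"
proof -
  assume f: "feas \<Delta> n v"
  have "(\<Sum>s\<in>{1..n}. (v(Suc n := 0)) s) = (\<Sum>s\<in>{1..n}. v s)" by (rule sum.cong) auto
  then show ?thesis using f by (auto simp: feas_def le_Suc_eq)
qed

lemma val_Suc: "val g (Suc n) v = val g n v + g (Suc n) (v (Suc n))"
  by (simp add: val_def)

lemma val_extend0: "val g (Suc n) (v(Suc n := 0)) = val g n v + g (Suc n) 0"
proof -
  have "val g n (v(Suc n := 0)) = val g n v" unfolding val_def by (rule sum.cong) auto
  then show ?thesis by (simp add: val_Suc)
qed

context
  fixes \<Delta> m M p :: real and T :: nat and g :: "nat \<Rightarrow> real \<Rightarrow> real"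
  assumes D: "\<Delta> > 0" and pnn: "p \<ge> 0" and G: "\<forall>t\<in>{1..T}. inG \<Delta> m M (g t)"
begin

lemma gmono: "t \<in> {1..T} \<Longrightarrow> x \<in> {0..\<Delta>} \<Longrightarrow> y \<in> {0..\<Delta>} \<Longrightarrow> x \<le> y \<Longrightarrow> g t x \<le> g t y"
  using G unfolding inG_def by (meson mono_onD)

lemma gzero: "t \<in> {1..T} \<Longrightarrow> g t 0 = 0"
  using G unfolding inG_def by blast

lemma gconc: "t \<in> {1..T} \<Longrightarrow> concave_on {0..\<Delta>} (g t)"
  using G unfolding inG_def by blast

lemma val_le: "t \<le> T \<Longrightarrow> feas \<Delta> t v \<Longrightarrow> val g t v \<le> (\<Sum>s\<in>{1..t}. g s \<Delta>)"
  unfolding val_def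
  by (rule sum_mono, rule gmono) (use D feas_dom in auto)

lemma bdd1: "t \<le> T \<Longrightarrow> bdd_above {val g t v | v. feas \<Delta> t v}"
  by (rule bdd_aboveI[where M="\<Sum>s\<in>{1..t}. g s \<Delta>"]) (use val_le in auto)

lemma bdd2: "t \<le> T \<Longrightarrow> bdd_above {val g t v + p * (\<Delta> - (\<Sum>s\<in>{1..t}. v s)) | v. feas \<Delta> t v}"
proof (rule bdd_aboveI[where M="(\<Sum>s\<in>{1..t}. g s \<Delta>) + p * \<Delta>"], clarify)
  fix v assume t: "t \<le> T" and f: "feas \<Delta> t v"
  have "p * (\<Delta> - (\<Sum>s\<in>{1..t}. v s)) \<le> p * \<Delta>"
    using pnn feas_sum_nonneg[OF f] by (simp add: mult_left_mono)
  then show "val g t v + p * (\<Delta> - (\<Sum>s\<in>{1..t}. v s)) \<le> (\<Sum>s\<in>{1..t}. g s \<Delta>) + p * \<Delta>"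
    using val_le[OF t f] by linarith
qed

lemma eta_ge: "t \<le> T \<Longrightarrow> feas \<Delta> t v \<Longrightarrow> val g t v \<le> eta_opt \<Delta> g t"
  unfolding eta_alt by (rule cSup_upper) (use bdd1 in auto)

lemma Hv_ge: "t \<le> T \<Longrightarrow> feas \<Delta> t v \<Longrightarrow> val g t v + p * (\<Delta> - (\<Sum>s\<in>{1..t}. v s)) \<le> Hv \<Delta> p g t"
  unfolding Hv_def by (rule cSup_upper) (use bdd2 in auto)

lemma eta_le: "(\<And>v. feas \<Delta> t v \<Longrightarrow> val g t v \<le> z) \<Longrightarrow> eta_opt \<Delta> g t \<le> z"
  unfolding eta_alt by (rule cSup_least) (use feas_zero[of \<Delta> t] D in auto)

lemma Hv_le: "(\<And>v. feas \<Delta> t v \<Longrightarrow> val g t v + p * (\<Delta> - (\<Sum>s\<in>{1..t}. v s)) \<le> z) \<Longrightarrow> Hv \<Delta> p g t \<le> z"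
  unfolding Hv_def by (rule cSup_least) (use feas_zero[of \<Delta> t] D in auto)

lemma eta0: "eta_opt \<Delta> g 0 = 0"
proof -
  have "{val g 0 v | v. feas \<Delta> 0 v} = {0}" using D by (auto simp: val_def feas_def)
  then show ?thesis by (simp add: eta_alt)
qed

lemma Hv0: "Hv \<Delta> p g 0 = p * \<Delta>"
proof -
  have "{val g 0 v + p * (\<Delta> - (\<Sum>s\<in>{1..0}. v s)) | v. feas \<Delta> 0 v} = {p * \<Delta>}"
    using D by (auto simp: val_def feas_def)
  then show ?thesis by (simp add: Hv_def)
qed

lemma eta_le_Hv: "t \<le> T \<Longrightarrow> eta_opt \<Delta> g t \<le> Hv \<Delta> p g t"
proof (rule eta_le)
  fix v assume t: "t \<le> T" and f: "feas \<Delta> t v"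
  have "0 \<le> p * (\<Delta> - (\<Sum>s\<in>{1..t}. v s))" using pnn f by (simp add: feas_def)
  with Hv_ge[OF t f] show "val g t v \<le> Hv \<Delta> p g t" by linarith
qed

lemma incr_nonneg: "Suc n \<le> T \<Longrightarrow> eta_opt \<Delta> g n \<le> eta_opt \<Delta> g (Suc n)"
proof (rule eta_le)
  fix v assume t: "Suc n \<le> T" and f: "feas \<Delta> n v"
  have "val g n v = val g (Suc n) (v(Suc n := 0))"
    using val_extend0 gzero t by simp
  also have "\<dots> \<le> eta_opt \<Delta> g (Suc n)" by (rule eta_ge[OF t feas_extend0[OF f]])
  finally show "val g n v \<le> eta_opt \<Delta> g (Suc n)" .
qed

lemma incr_le: "Suc n \<le> T \<Longrightarrow> eta_opt \<Delta> g (Suc n) \<le> eta_opt \<Delta> g n + g (Suc n) \<Delta>"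
proof (rule eta_le)
  fix v assume t: "Suc n \<le> T" and f: "feas \<Delta> (Suc n) v"
  have "val g n v \<le> eta_opt \<Delta> g n" using eta_ge[OF _ feas_restrict[OF f]] t by simp
  moreover have "g (Suc n) (v (Suc n)) \<le> g (Suc n) \<Delta>"
    by (rule gmono) (use t feas_dom[OF f, of "Suc n"] D in auto)
  ultimately show "val g (Suc n) v \<le> eta_opt \<Delta> g n + g (Suc n) \<Delta>" by (simp add: val_Suc)
qed

lemma Hv_S: assumes t: "Suc n \<le> T" and lin: "\<forall>x\<in>{0..\<Delta>}. g (Suc n) x \<le> p * x"
  shows "Hv \<Delta> p g (Suc n) \<le> Hv \<Delta> p g n"
proof (rule Hv_le)
  fix v assume f: "feas \<Delta> (Suc n) v"
  have "g (Suc n) (v (Suc n)) \<le> p * v (Suc n)" using lin feas_dom[OF f, of "Suc n"] by auto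
  then have "val g (Suc n) v + p * (\<Delta> - (\<Sum>s\<in>{1..Suc n}. v s)) \<le> val g n v + p * (\<Delta> - (\<Sum>s\<in>{1..n}. v s))"
    by (simp add: val_Suc algebra_simps)
  also have "\<dots> \<le> Hv \<Delta> p g n" using Hv_ge[OF _ feas_restrict[OF f]] t by simp
  finally show "val g (Suc n) v + p * (\<Delta> - (\<Sum>s\<in>{1..Suc n}. v s)) \<le> Hv \<Delta> p g n" .
qed

end

context
  fixes \<Delta> m M p :: real and T :: nat and g :: "nat \<Rightarrow> real \<Rightarrow> real"
  assumes D: "\<Delta> > 0" and pnn: "p \<ge> 0" and G: "\<forall>t\<in>{1..T}. inG \<Delta> m M (g t)"
begin

lemma pair_conc:
  assumes s: "s \<in> {1..T}" and x: "x \<in> {0..\<Delta>}" and y: "y \<in> {0..\<Delta>}" and th: "0 \<le> \<theta>" "\<theta> \<le> 1"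
  shows "g s x + g s y \<le> g s ((1-\<theta>)*x + \<theta>*y) + g s (\<theta>*x + (1-\<theta>)*y)"
proof -
  have c: "concave_on {0..\<Delta>} (g s)" using G s unfolding inG_def by blast
  have 1: "g s ((1-\<theta>)*x + \<theta>*y) \<ge> (1-\<theta>) * g s x + \<theta> * g s y"
    using concave_onD[OF c th x y] by simp
  have 2: "g s ((1-\<theta>)*y + \<theta>*x) \<ge> (1-\<theta>) * g s y + \<theta> * g s x"
    using concave_onD[OF c th y x] by simp
  have "\<theta>*x + (1-\<theta>)*y = (1-\<theta>)*y + \<theta>*x" by simp
  with 1 2 show ?thesis by (simp add: algebra_simps)
qed

lemma submod_core:
  assumes t: "Suc n \<le> T" and fa: "feas \<Delta> (Suc n) a" and fb: "feas \<Delta> n b"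
  shows "val g (Suc n) a + p * (\<Delta> - (\<Sum>s\<in>{1..Suc n}. a s)) + val g n b
     \<le> eta_opt \<Delta> g (Suc n) + Hv \<Delta> p g n"
proof -
  define A where "A = (\<Sum>s\<in>{1..n}. a s)"
  define B where "B = (\<Sum>s\<in>{1..n}. b s)"
  define aT where "aT = a (Suc n)"
  have at0: "0 \<le> aT" using fa by (auto simp: feas_def aT_def)
  have AD: "A + aT \<le> \<Delta>" using fa by (simp add: feas_def A_def aT_def)
  have BD: "B \<le> \<Delta>" using fb by (simp add: feas_def B_def)
  define th where "th = (if B \<le> \<Delta> - aT then 0 else (B - (\<Delta> - aT)) / (B - A))"
  have th: "0 \<le> th \<and> th \<le> 1 \<and> (1-th)*B + th*A + aT \<le> \<Delta> \<and> th*B + (1-th)*A \<le> A + aT"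
  proof (cases "B \<le> \<Delta> - aT")
    case True then show ?thesis using th_def AD at0 by simp
  next
    case False
    then have BA: "B - A > 0" using AD by simp
    have e: "th * (B - A) = B - (\<Delta> - aT)" using False BA by (simp add: th_def)
    have "th \<ge> 0" using False BA by (simp add: th_def)
    moreover have "th \<le> 1" using False BA AD by (simp add: th_def divide_le_eq_1)
    moreover have "(1-th)*B + th*A + aT \<le> \<Delta>" using e by (simp add: algebra_simps)
    moreover have "th*B + (1-th)*A \<le> A + aT" using e BD by (simp add: algebra_simps)
    ultimately show ?thesis by blast
  qed
  define c where "c = (\<lambda>s. if s = Suc n then aT else (1-th) * b s + th * a s)"
  define d where "d = (\<lambda>s. th * b s + (1-th) * a s)"
  have sc: "(\<Sum>s\<in>{1..n}. c s) = (1-th)*B + th*A"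
  proof -
    have "(\<Sum>s\<in>{1..n}. c s) = (\<Sum>s\<in>{1..n}. (1-th) * b s + th * a s)"
      by (rule sum.cong) (auto simp: c_def)
    also have "\<dots> = (1-th)*B + th*A" by (simp add: sum.distrib sum_distrib_left A_def B_def)
    finally show ?thesis .
  qed
  have sd: "(\<Sum>s\<in>{1..n}. d s) = th*B + (1-th)*A"
    by (simp add: d_def sum.distrib sum_distrib_left A_def B_def)
  have dom: "\<And>s. s \<in> {1..n} \<Longrightarrow> a s \<in> {0..\<Delta>} \<and> b s \<in> {0..\<Delta>}"
    using feas_dom[OF fa] feas_dom[OF fb] by auto
  have fc: "feas \<Delta> (Suc n) c"
    unfolding feas_def
  proof
    show "\<forall>s\<in>{1..Suc n}. 0 \<le> c s"
    proof
      fix s assume s: "s \<in> {1..Suc n}"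
      show "0 \<le> c s"
      proof (cases "s = Suc n")
        case True then show ?thesis using at0 by (simp add: c_def)
      next
        case False then have "s \<in> {1..n}" using s by auto
        then show ?thesis using dom th False by (simp add: c_def)
      qed
    qed
    show "(\<Sum>s\<in>{1..Suc n}. c s) \<le> \<Delta>" using sc th by (simp add: c_def)
  qed
  have fd: "feas \<Delta> n d"
    unfolding feas_def using dom th sd AD by (auto simp: d_def)
  have pairs: "val g n a + val g n b \<le> val g n c + val g n d"
  proof -
    have "val g n a + val g n b = (\<Sum>s\<in>{1..n}. g s (b s) + g s (a s))"
      by (simp add: val_def sum.distrib)
    also have "\<dots> \<le> (\<Sum>s\<in>{1..n}. g s (c s) + g s (d s))"
    proof (rule sum_mono)
      fix s assume s: "s \<in> {1..n}"
      have "s \<in> {1..T}" using s t by auto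
      then show "g s (b s) + g s (a s) \<le> g s (c s) + g s (d s)"
        using pair_conc[of s "b s" "a s" th] dom[OF s] th s by (simp add: c_def d_def)
    qed
    also have "\<dots> = val g n c + val g n d" by (simp add: val_def sum.distrib)
    finally show ?thesis .
  qed
  have "val g (Suc n) a + p * (\<Delta> - (\<Sum>s\<in>{1..Suc n}. a s)) + val g n b
      = val g n a + val g n b + g (Suc n) aT + p * (\<Delta> - A - aT)"
    by (simp add: val_Suc A_def aT_def)
  also have "\<dots> \<le> val g n c + g (Suc n) aT + (val g n d + p * (\<Delta> - (\<Sum>s\<in>{1..n}. d s)))"
  proof -
    have "p * (\<Delta> - A - aT) \<le> p * (\<Delta> - (\<Sum>s\<in>{1..n}. d s))"
      using sd th pnn by (intro mult_left_mono) auto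
    then show ?thesis using pairs by linarith
  qed
  also have "val g n c + g (Suc n) aT = val g (Suc n) c" by (simp add: val_Suc c_def)
  also have "\<dots> \<le> eta_opt \<Delta> g (Suc n)" by (rule eta_ge[OF D pnn G t fc])
  finally show ?thesis using Hv_ge[OF D pnn G _ fd] t by simp
qed

end

context
  fixes \<Delta> m M p :: real and T :: nat and g :: "nat \<Rightarrow> real \<Rightarrow> real"
  assumes D: "\<Delta> > 0" and pnn: "p \<ge> 0" and G: "\<forall>t\<in>{1..T}. inG \<Delta> m M (g t)"
begin

lemma submod:
  assumes t: "Suc n \<le> T"
  shows "Hv \<Delta> p g (Suc n) + eta_opt \<Delta> g n \<le> eta_opt \<Delta> g (Suc n) + Hv \<Delta> p g n"
proof -
  have "eta_opt \<Delta> g n \<le> eta_opt \<Delta> g (Suc n) + Hv \<Delta> p g n - Hv \<Delta> p g (Suc n)"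
  proof (rule eta_le[OF D pnn G])
    fix b assume fb: "feas \<Delta> n b"
    have "Hv \<Delta> p g (Suc n) \<le> eta_opt \<Delta> g (Suc n) + Hv \<Delta> p g n - val g n b"
      by (rule Hv_le[OF D pnn G]) (use submod_core[OF D pnn G t _ fb] in force)
    then show "val g n b \<le> eta_opt \<Delta> g (Suc n) + Hv \<Delta> p g n - Hv \<Delta> p g (Suc n)" by linarith
  qed
  then show ?thesis by linarith
qed

lemma tangent:
  assumes s: "s \<in> {1..T}" and sl: "slope0 \<Delta> (g s) \<le> p" and x: "x \<in> {0..\<Delta>}"
  shows "g s x \<le> p * x"
proof -
  have iG: "inG \<Delta> m M (g s)" using G s by blast
  then obtain d where der: "(g s has_real_derivative d) (at 0 within {0..\<Delta>})"
    unfolding inG_def by blast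
  have F: "at (0::real) within {0..\<Delta>} = at_right 0" using D by (simp add: at_within_Icc_at_right)
  have lim: "((\<lambda>y. (g s y - g s 0) / (y - 0)) \<longlongrightarrow> d) (at_right 0)"
    using der F by (simp add: has_field_derivative_iff)
  have "slope0 \<Delta> (g s) = d"
    unfolding slope0_def
  proof (rule the_equality)
    show "(g s has_real_derivative d) (at 0 within {0..\<Delta>})" by (rule der)
    fix e assume "(g s has_real_derivative e) (at 0 within {0..\<Delta>})"
    then have "((\<lambda>y. (g s y - g s 0) / (y - 0)) \<longlongrightarrow> e) (at_right 0)"
      using F by (simp add: has_field_derivative_iff)
    then show "e = d" using lim tendsto_unique trivial_limit_at_right_real by blast
  qed
  with sl have dp: "d \<le> p" by simp
  have g0: "g s 0 = 0" using iG unfolding inG_def by blast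
  have c: "concave_on {0..\<Delta>} (g s)" using iG unfolding inG_def by blast
  show ?thesis
  proof (cases "x = 0")
    case True then show ?thesis using g0 by simp
  next
    case False
    then have xp: "x > 0" using x by simp
    have ev: "eventually (\<lambda>y. g s x / x \<le> (g s y - g s 0) / (y - 0)) (at_right 0)"
    proof (rule eventually_mono[OF eventually_at_right_real[OF xp]])
      fix y :: real assume "y \<in> {0<..<x}"
      then have y: "0 < y" "y < x" by auto
      have "g s ((1 - y/x) *\<^sub>R 0 + (y/x) *\<^sub>R x) \<ge> (1 - y/x) * g s 0 + (y/x) * g s x"
        using concave_onD[OF c, of "y/x" 0 x] y x xp by simp
      then have "g s y \<ge> (y/x) * g s x" using g0 xp by simp
      then show "g s x / x \<le> (g s y - g s 0) / (y - 0)" using y xp g0 by (simp add: field_simps)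
    qed
    have "g s x / x \<le> d"
      by (rule tendsto_lowerbound[OF lim ev]) simp
    then have "g s x \<le> d * x" using xp by (simp add: field_simps)
    also have "\<dots> \<le> p * x" using dp xp by (simp add: mult_right_mono)
    finally show ?thesis .
  qed
qed

end

context
  fixes \<Delta> m M p :: real and T :: nat and g :: "nat \<Rightarrow> real \<Rightarrow> real"
  assumes D: "\<Delta> > 0" and pnn: "p \<ge> 0" and G: "\<forall>t\<in>{1..T}. inG \<Delta> m M (g t)"
begin

lemma cr_val:
  assumes t: "Suc n \<le> T" and pi: "\<pi> \<ge> 1"
  shows "g (Suc n) (cr_pursuit \<pi> \<Delta> g (Suc n)) = (eta_opt \<Delta> g (Suc n) - eta_opt \<Delta> g n) / \<pi>"
proof -
  define c where "c = (eta_opt \<Delta> g (Suc n) - eta_opt \<Delta> g n) / \<pi>"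
  have sT: "Suc n \<in> {1..T}" using t by simp
  have iG: "inG \<Delta> m M (g (Suc n))" using G sT by blast
  have cont: "continuous_on {0..\<Delta>} (g (Suc n))"
    using iG unfolding inG_def continuous_on_eq_continuous_within
    by (blast intro: differentiable_imp_continuous_within)
  have g0: "g (Suc n) 0 = 0" using iG unfolding inG_def by blast
  have i0: "0 \<le> eta_opt \<Delta> g (Suc n) - eta_opt \<Delta> g n" using incr_nonneg[OF D pnn G t] by simp
  have i1: "eta_opt \<Delta> g (Suc n) - eta_opt \<Delta> g n \<le> g (Suc n) \<Delta>" using incr_le[OF D pnn G t] by simp
  have c0: "0 \<le> c" using i0 pi by (simp add: c_def)
  have "c \<le> eta_opt \<Delta> g (Suc n) - eta_opt \<Delta> g n"
  proof -
    have "c * \<pi> = eta_opt \<Delta> g (Suc n) - eta_opt \<Delta> g n" using pi by (simp add: c_def)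
    moreover have "c * 1 \<le> c * \<pi>" using c0 pi by (intro mult_left_mono)
    ultimately show ?thesis by simp
  qed
  then have c1: "c \<le> g (Suc n) \<Delta>" using i1 by simp
  define Z where "Z = {v \<in> {0..\<Delta>}. g (Suc n) v = c}"
  obtain x where x: "x \<ge> 0" "x \<le> \<Delta>" "g (Suc n) x = c"
    using IVT'[of "g (Suc n)" 0 c \<Delta>] c0 c1 g0 D cont by auto
  have ne: "Z \<noteq> {}" using x by (auto simp: Z_def)
  have bb: "bdd_below Z" by (rule bdd_belowI[of _ 0]) (auto simp: Z_def)
  have cl: "closed Z" unfolding Z_def by (rule continuous_closed_preimage_constant[OF cont]) simp
  have IZ: "Inf Z \<in> Z" by (rule closed_contains_Inf[OF ne bb cl])
  have "cr_pursuit \<pi> \<Delta> g (Suc n) \<in> Z"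
    unfolding cr_pursuit_def
  proof (rule LeastI2_order[where x="Inf Z"])
    show "Inf Z \<in> {0..\<Delta>} \<and> g (Suc n) (Inf Z) = (eta_opt \<Delta> g (Suc n) - eta_opt \<Delta> g (Suc n - 1)) / \<pi>"
      using IZ by (simp add: Z_def c_def)
    fix y assume "y \<in> {0..\<Delta>} \<and> g (Suc n) y = (eta_opt \<Delta> g (Suc n) - eta_opt \<Delta> g (Suc n - 1)) / \<pi>"
    then have "y \<in> Z" by (simp add: Z_def c_def)
    then show "Inf Z \<le> y" by (rule cInf_lower[OF _ bb])
  next
    fix y assume "y \<in> {0..\<Delta>} \<and> g (Suc n) y = (eta_opt \<Delta> g (Suc n) - eta_opt \<Delta> g (Suc n - 1)) / \<pi>"
    then show "y \<in> Z" by (simp add: Z_def c_def)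
  qed
  then show ?thesis by (simp add: Z_def c_def)
qed

lemma invariant:
  "n \<le> T \<Longrightarrow> (\<Sum>t\<in>{t\<in>{1..n}. slope0 \<Delta> (g t) \<le> p}. eta_opt \<Delta> g t - eta_opt \<Delta> g (t - 1))
     \<le> eta_opt \<Delta> g n - Hv \<Delta> p g n + p * \<Delta>"
proof (induction n)
  case 0
  then show ?case by (simp add: eta0[OF D pnn G] Hv0[OF D pnn G])
next
  case (Suc n)
  let ?P = "\<lambda>t. slope0 \<Delta> (g t) \<le> p"
  let ?f = "\<lambda>t. eta_opt \<Delta> g t - eta_opt \<Delta> g (t - 1)"
  have IH: "(\<Sum>t\<in>{t\<in>{1..n}. ?P t}. ?f t) \<le> eta_opt \<Delta> g n - Hv \<Delta> p g n + p * \<Delta>"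
    using Suc by simp
  show ?case
  proof (cases "?P (Suc n)")
    case True
    have eq: "{t\<in>{1..Suc n}. ?P t} = insert (Suc n) {t\<in>{1..n}. ?P t}" using True by (auto simp: le_Suc_eq)
    have lin: "\<forall>x\<in>{0..\<Delta>}. g (Suc n) x \<le> p * x"
      using tangent[OF D pnn G _ True] Suc.prems by auto
    have "Hv \<Delta> p g (Suc n) \<le> Hv \<Delta> p g n" by (rule Hv_S[OF D pnn G Suc.prems lin])
    have "(\<Sum>t\<in>{t\<in>{1..Suc n}. ?P t}. ?f t) = ?f (Suc n) + (\<Sum>t\<in>{t\<in>{1..n}. ?P t}. ?f t)"
      unfolding eq by (rule sum.insert) auto
    then show ?thesis using IH \<open>Hv \<Delta> p g (Suc n) \<le> Hv \<Delta> p g n\<close> by simp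
  next
    case False
    have eq: "{t\<in>{1..Suc n}. ?P t} = {t\<in>{1..n}. ?P t}" using False by (auto simp: le_Suc_eq)
    have "(\<Sum>t\<in>{t\<in>{1..Suc n}. ?P t}. ?f t) = (\<Sum>t\<in>{t\<in>{1..n}. ?P t}. ?f t)"
      unfolding eq ..
    then show ?thesis using IH submod[OF D pnn G Suc.prems] by simp
  qed
qed

end

theorem lemma10:
  fixes \<Delta> m M \<pi> p :: real and T :: nat and g :: "nat \<Rightarrow> real \<Rightarrow> real"
  assumes "\<Delta> > 0" and "0 < m" and "m \<le> M"
    and "\<pi> \<ge> 1"
    and "T \<ge> 1"
    and "\<forall>t\<in>{1..T}. inG \<Delta> m M (g t)"
    and "m \<le> p" and "p \<le> M"
  shows "(\<Sum>t\<in>{t\<in>{1..T}. slope0 \<Delta> (g t) \<le> p}. g t (cr_pursuit \<pi> \<Delta> g t))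
           \<le> p * \<Delta> / \<pi>"
proof -
  have D: "\<Delta> > 0" and pnn: "p \<ge> 0" and G: "\<forall>t\<in>{1..T}. inG \<Delta> m M (g t)"
    using assms by auto
  have "(\<Sum>t\<in>{t\<in>{1..T}. slope0 \<Delta> (g t) \<le> p}. g t (cr_pursuit \<pi> \<Delta> g t))
      = (\<Sum>t\<in>{t\<in>{1..T}. slope0 \<Delta> (g t) \<le> p}. (eta_opt \<Delta> g t - eta_opt \<Delta> g (t - 1)) / \<pi>)"
  proof (rule sum.cong[OF refl])
    fix t assume "t \<in> {t\<in>{1..T}. slope0 \<Delta> (g t) \<le> p}"
    then obtain n where n: "t = Suc n" "Suc n \<le> T" by (cases t) auto
    show "g t (cr_pursuit \<pi> \<Delta> g t) = (eta_opt \<Delta> g t - eta_opt \<Delta> g (t - 1)) / \<pi>"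
      using cr_val[OF D pnn G n(2) assms(4)] n(1) by simp
  qed
  also have "\<dots> = (\<Sum>t\<in>{t\<in>{1..T}. slope0 \<Delta> (g t) \<le> p}. eta_opt \<Delta> g t - eta_opt \<Delta> g (t - 1)) / \<pi>"
    by (simp add: sum_divide_distrib)
  also have "\<dots> \<le> (eta_opt \<Delta> g T - Hv \<Delta> p g T + p * \<Delta>) / \<pi>"
    using invariant[OF D pnn G order_refl] assms(4) by (simp add: divide_right_mono)
  also have "\<dots> \<le> p * \<Delta> / \<pi>"
    using eta_le_Hv[OF D pnn G order_refl] assms(4) by (simp add: divide_right_mono)
  finally show ?thesis .
qed

end
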